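(* For all integers $n$ and $\alpha$ with $n<\alpha\le 2^{n-1}+1$, there exists a minimal $n$-state nondeterministic finite automaton accepting an infix-closed language whose equivalent minimal deterministic finite automaton has exactly $\alpha$ states. Moreover, if a minimal $n$-state nondeterministic finite automaton accepts an infix-closed language whose equivalent minimal deterministic finite automaton has exactly $n$ states, then $n=1$.
   Context: NFAs have a single initial state and a transition function $\delta:Q\times\Sigma\to 2^Q$ that may map to the empty set (no sink state is needed or counted); DFAs are complete, so a sink state is counted. A minimal $n$-state NFA is an NFA with $n$ states such that no NFA with fewer states accepts the same language. A language $L\subseteq\Sigma^*$ is infix-closed if $xyz\in L$ implies $y\in L$ for all $x,y,z\in\Sigma^*$. *)

theory Defs
  imports Main
begin

text \<open>States are natural numbers (any finite state set can be renamed into nat).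
  An NFA has a single initial state; transitions may map to the empty set
  (no sink state needed).\<close>

record 'a nfa =
  nstates :: "nat set"
  ninit   :: nat
  ntrans  :: "nat \<Rightarrow> 'a \<Rightarrow> nat set"
  nfinal  :: "nat set"

definition wf_nfa :: "'a set \<Rightarrow> 'a nfa \<Rightarrow> bool" where
  "wf_nfa \<Sigma> A \<longleftrightarrow> finite (nstates A) \<and> ninit A \<in> nstates A \<and> nfinal A \<subseteq> nstates A
     \<and> (\<forall>q\<in>nstates A. \<forall>a\<in>\<Sigma>. ntrans A q a \<subseteq> nstates A)"

fun nreach :: "'a nfa \<Rightarrow> nat set \<Rightarrow> 'a list \<Rightarrow> nat set" where
  "nreach A S [] = S"
| "nreach A S (a # w) = nreach A (\<Union>q\<in>S. ntrans A q a) w"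

definition nlang :: "'a set \<Rightarrow> 'a nfa \<Rightarrow> 'a list set" where
  "nlang \<Sigma> A = {w \<in> lists \<Sigma>. nreach A {ninit A} w \<inter> nfinal A \<noteq> {}}"

record 'a dfa =
  dstates :: "nat set"
  dinit   :: nat
  dtrans  :: "nat \<Rightarrow> 'a \<Rightarrow> nat"
  dfinal  :: "nat set"

definition wf_dfa :: "'a set \<Rightarrow> 'a dfa \<Rightarrow> bool" where
  "wf_dfa \<Sigma> D \<longleftrightarrow> finite (dstates D) \<and> dinit D \<in> dstates D \<and> dfinal D \<subseteq> dstates D
     \<and> (\<forall>q\<in>dstates D. \<forall>a\<in>\<Sigma>. dtrans D q a \<in> dstates D)"

definition dlang :: "'a set \<Rightarrow> 'a dfa \<Rightarrow> 'a list set" where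
  "dlang \<Sigma> D = {w \<in> lists \<Sigma>. fold (\<lambda>a q. dtrans D q a) w (dinit D) \<in> dfinal D}"

definition minimal_nfa :: "'a set \<Rightarrow> 'a nfa \<Rightarrow> nat \<Rightarrow> bool" where
  "minimal_nfa \<Sigma> A n \<longleftrightarrow> wf_nfa \<Sigma> A \<and> card (nstates A) = n
     \<and> (\<forall>B. wf_nfa \<Sigma> B \<and> nlang \<Sigma> B = nlang \<Sigma> A \<longrightarrow> n \<le> card (nstates B))"

definition min_dfa_states :: "'a set \<Rightarrow> 'a list set \<Rightarrow> nat \<Rightarrow> bool" where
  "min_dfa_states \<Sigma> L k \<longleftrightarrow>
     (\<exists>D. wf_dfa \<Sigma> D \<and> dlang \<Sigma> D = L \<and> card (dstates D) = k)
     \<and> (\<forall>D. wf_dfa \<Sigma> D \<and> dlang \<Sigma> D = L \<longrightarrow> k \<le> card (dstates D))"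

definition infix_closed :: "'a list set \<Rightarrow> bool" where
  "infix_closed L \<longleftrightarrow> (\<forall>x y z. x @ y @ z \<in> L \<longrightarrow> y \<in> L)"

end

theory Submission
  imports Defs
begin


lemma nreach_append: "nreach A S (u @ v) = nreach A (nreach A S u) v"
  by (induction u arbitrary: S) auto

lemma nreach_empty[simp]: "nreach A {} w = {}"
  by (induction w) auto

lemma nreach_union: "nreach A S w = (\<Union>q\<in>S. nreach A {q} w)"
proof (induction w arbitrary: S)
  case Nil then show ?case by auto
next
  case (Cons a w)
  have "nreach A S (a # w) = (\<Union>p\<in>(\<Union>q\<in>S. ntrans A q a). nreach A {p} w)"
    using Cons.IH[of "\<Union>q\<in>S. ntrans A q a"] by simp
  also have "\<dots> = (\<Union>q\<in>S. \<Union>p\<in>ntrans A q a. nreach A {p} w)" by (rule UN_UN_flatten)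
  also have "\<dots> = (\<Union>q\<in>S. nreach A {q} (a # w))"
  proof -
    have "nreach A {q} (a # w) = (\<Union>p\<in>ntrans A q a. nreach A {p} w)" for q
      using Cons.IH[of "ntrans A q a"] by simp
    then show ?thesis by simp
  qed
  finally show ?case .
qed

lemma nreach_states:
  assumes "wf_nfa \<Sigma> A" "S \<subseteq> nstates A" "w \<in> lists \<Sigma>"
  shows "nreach A S w \<subseteq> nstates A"
  using assms(2,3)
proof (induction w arbitrary: S)
  case Nil then show ?case by simp
next
  case (Cons a w)
  have "a \<in> \<Sigma>" using Cons.prems(2) by simp
  have W: "\<forall>q\<in>nstates A. \<forall>a\<in>\<Sigma>. ntrans A q a \<subseteq> nstates A"
    using assms(1) unfolding wf_nfa_def by simp
  have "\<forall>q\<in>S. ntrans A q a \<subseteq> nstates A"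
  proof
    fix q assume "q \<in> S"
    then have "q \<in> nstates A" using Cons.prems(1) by auto
    then show "ntrans A q a \<subseteq> nstates A" using W \<open>a \<in> \<Sigma>\<close> by simp
  qed
  then have "(\<Union>q\<in>S. ntrans A q a) \<subseteq> nstates A" by blast
  then show ?case using Cons by simp
qed

lemma fooling:
  assumes wf: "wf_nfa \<Sigma> B" and fin: "finite I"
    and acc: "\<forall>i\<in>I. x i @ y i \<in> nlang \<Sigma> B"
    and fool: "\<forall>i\<in>I. \<forall>j\<in>I. i \<noteq> j \<longrightarrow> x i @ y j \<notin> nlang \<Sigma> B \<or> x j @ y i \<notin> nlang \<Sigma> B"
  shows "card I \<le> card (nstates B)"
proof -
  have ex: "\<exists>p. p \<in> nreach B {ninit B} (x i) \<and> nreach B {p} (y i) \<inter> nfinal B \<noteq> {}" if "i \<in> I" for i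
  proof -
    have "nreach B {ninit B} (x i @ y i) \<inter> nfinal B \<noteq> {}" using acc that unfolding nlang_def by auto
    then show ?thesis unfolding nreach_append by (subst (asm) nreach_union) auto
  qed
  define p where "p i = (SOME p. p \<in> nreach B {ninit B} (x i) \<and> nreach B {p} (y i) \<inter> nfinal B \<noteq> {})" for i
  have p: "p i \<in> nreach B {ninit B} (x i) \<and> nreach B {p i} (y i) \<inter> nfinal B \<noteq> {}" if "i \<in> I" for i
    unfolding p_def using someI_ex[OF ex[OF that]] .
  have inl: "x i @ y j \<in> nlang \<Sigma> B" if "i \<in> I" "j \<in> I" "p i = p j" for i j
  proof -
    have l: "x i \<in> lists \<Sigma>" "y j \<in> lists \<Sigma>" using acc that unfolding nlang_def by auto
    have "nreach B {p i} (y j) \<subseteq> nreach B {ninit B} (x i @ y j)"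
      unfolding nreach_append using p[OF that(1)] by (subst nreach_union[of _ "nreach B {ninit B} (x i)"]) auto
    then have "nreach B {ninit B} (x i @ y j) \<inter> nfinal B \<noteq> {}" using p[OF that(2)] that(3) by auto
    then show ?thesis using l unfolding nlang_def by auto
  qed
  have "inj_on p I"
    by (rule inj_onI) (metis inl fool)
  moreover have "p ` I \<subseteq> nstates B"
  proof
    fix q assume "q \<in> p ` I"
    then obtain i where i: "i \<in> I" "q = p i" by auto
    have "x i \<in> lists \<Sigma>" using acc i unfolding nlang_def by auto
    moreover have "ninit B \<in> nstates B" using wf unfolding wf_nfa_def by auto
    ultimately show "q \<in> nstates B" using nreach_states[OF wf, of "{ninit B}" "x i"] p[OF i(1)] i by auto
  qed
  moreover have "finite (nstates B)" using wf unfolding wf_nfa_def by auto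
  ultimately show ?thesis using card_inj_on_le by blast
qed

definition quot :: "'a set \<Rightarrow> 'a list set \<Rightarrow> 'a list \<Rightarrow> 'a list set" where
  "quot \<Sigma> L u = {z \<in> lists \<Sigma>. u @ z \<in> L}"

lemma dfa_states_in:
  assumes "wf_dfa \<Sigma> D" "q \<in> dstates D" "u \<in> lists \<Sigma>"
  shows "fold (\<lambda>a q. dtrans D q a) u q \<in> dstates D"
  using assms(2,3) by (induction u arbitrary: q) (use assms(1) in \<open>auto simp: wf_dfa_def\<close>)

lemma min_dfa_quot:
  assumes L: "L \<subseteq> lists \<Sigma>" and fin: "finite (quot \<Sigma> L ` lists \<Sigma>)"
    and card: "card (quot \<Sigma> L ` lists \<Sigma>) = \<alpha>"
  shows "min_dfa_states \<Sigma> L \<alpha>"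
proof -
  let ?Q = "quot \<Sigma> L ` lists \<Sigma>"
  have lower: "\<alpha> \<le> card (dstates D)" if D: "wf_dfa \<Sigma> D" "dlang \<Sigma> D = L" for D
  proof -
    define dl where "dl q = {z \<in> lists \<Sigma>. fold (\<lambda>a q. dtrans D q a) z q \<in> dfinal D}" for q
    have "quot \<Sigma> L u = dl (fold (\<lambda>a q. dtrans D q a) u (dinit D))" if "u \<in> lists \<Sigma>" for u
      using that D(2) unfolding quot_def dl_def dlang_def by auto
    moreover have "fold (\<lambda>a q. dtrans D q a) u (dinit D) \<in> dstates D" if "u \<in> lists \<Sigma>" for u
      using dfa_states_in[OF D(1) _ that] D(1) unfolding wf_dfa_def by auto
    ultimately have "?Q \<subseteq> dl ` dstates D" by auto
    moreover have "finite (dstates D)" using D(1) unfolding wf_dfa_def by auto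
    ultimately show ?thesis using card by (metis card_image_le card_mono dual_order.trans finite_imageI)
  qed
  obtain e where e: "bij_betw e {0..<\<alpha>} ?Q" using ex_bij_betw_nat_finite[OF fin] card by auto
  define ei where "ei = the_inv_into {0..<\<alpha>} e"
  have ei: "bij_betw ei ?Q {0..<\<alpha>}" unfolding ei_def using bij_betw_the_inv_into[OF e] .
  have eei: "e (ei X) = X" if "X \<in> ?Q" for X
    unfolding ei_def using f_the_inv_into_f_bij_betw[OF e] that by blast
  have eQ: "e q \<in> ?Q" if "q \<in> {0..<\<alpha>}" for q using bij_betwE[OF e] that by blast
  have eiQ: "ei X \<in> {0..<\<alpha>}" if "X \<in> ?Q" for X using bij_betwE[OF ei] that by blast
  define D where "D = \<lparr>dstates = {0..<\<alpha>}, dinit = ei (quot \<Sigma> L []),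
     dtrans = (\<lambda>q a. ei {z. a # z \<in> e q}), dfinal = {q \<in> {0..<\<alpha>}. [] \<in> e q}\<rparr>"
  have der: "{z. a # z \<in> quot \<Sigma> L u} = quot \<Sigma> L (u @ [a])" if "a \<in> \<Sigma>" for a u
    using that unfolding quot_def by auto
  have wf: "wf_dfa \<Sigma> D"
    unfolding wf_dfa_def D_def
  proof (simp, intro conjI ballI)
    show "ei (quot \<Sigma> L []) < \<alpha>" using eiQ[of "quot \<Sigma> L []"] by auto
  next
    fix q a assume q: "q \<in> {0..<\<alpha>}" and a: "a \<in> \<Sigma>"
    obtain u where u: "u \<in> lists \<Sigma>" "e q = quot \<Sigma> L u" using eQ[OF q] by auto
    have "{z. a # z \<in> e q} \<in> ?Q" using u a der by auto
    then show "ei {z. a # z \<in> e q} < \<alpha>" using eiQ by auto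
  qed auto
  have run: "fold (\<lambda>a q. dtrans D q a) v (ei (quot \<Sigma> L u)) = ei (quot \<Sigma> L (u @ v))"
    if "v \<in> lists \<Sigma>" "u \<in> lists \<Sigma>" for u v
    using that
  proof (induction v arbitrary: u)
    case Nil then show ?case by simp
  next
    case (Cons a v)
    have a: "a \<in> \<Sigma>" using Cons by simp
    have "quot \<Sigma> L u \<in> ?Q" using Cons.prems by simp
    then have "dtrans D (ei (quot \<Sigma> L u)) a = ei (quot \<Sigma> L (u @ [a]))"
      unfolding D_def using eei der[OF a] by simp
    then show ?case using Cons.IH[of "u @ [a]"] Cons.prems a by simp
  qed
  have "dlang \<Sigma> D = L"
  proof -
    have "fold (\<lambda>a q. dtrans D q a) w (dinit D) \<in> dfinal D \<longleftrightarrow> w \<in> L" if "w \<in> lists \<Sigma>" for w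
    proof -
      have "fold (\<lambda>a q. dtrans D q a) w (dinit D) = ei (quot \<Sigma> L w)"
        using run[OF that, of "[]"] by (simp add: D_def)
      moreover have "quot \<Sigma> L w \<in> ?Q" using that by auto
      ultimately show ?thesis using eei eiQ that unfolding D_def quot_def by auto
    qed
    then show ?thesis using L unfolding dlang_def by auto
  qed
  moreover have "card (dstates D) = \<alpha>" by (simp add: D_def)
  ultimately show ?thesis unfolding min_dfa_states_def using wf lower by blast
qed




lemma part2:
  assumes m: "minimal_nfa \<Sigma> A n" and ic: "infix_closed (nlang \<Sigma> A)"
    and d: "min_dfa_states \<Sigma> (nlang \<Sigma> A) n"
  shows "n = 1"
proof -
  let ?L = "nlang \<Sigma> A"
  have wfA: "wf_nfa \<Sigma> A" and cA: "card (nstates A) = n"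
    and minA: "\<And>B. wf_nfa \<Sigma> B \<Longrightarrow> nlang \<Sigma> B = ?L \<Longrightarrow> n \<le> card (nstates B)"
    using m unfolding minimal_nfa_def by auto
  have "n \<ge> 1" using wfA cA unfolding wf_nfa_def
    by (metis card_0_eq empty_iff less_one not_le)
  have Lsub: "?L \<subseteq> lists \<Sigma>" unfolding nlang_def by auto
  show ?thesis
  proof (cases "?L = lists \<Sigma>")
    case True
    define B :: "'a nfa" where "B = \<lparr>nstates = {0}, ninit = 0, ntrans = (\<lambda>q a. {0}), nfinal = {0}\<rparr>"
    have r: "nreach B {0} w = {0}" for w by (induction w) (auto simp: B_def)
    have "wf_nfa \<Sigma> B" by (simp add: B_def wf_nfa_def)
    moreover have "nlang \<Sigma> B = ?L" using True r unfolding nlang_def by (auto simp: B_def)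
    ultimately have "n \<le> 1" using minA by (fastforce simp: B_def)
    then show ?thesis using \<open>n \<ge> 1\<close> by simp
  next
    case False
    then obtain w where w: "w \<in> lists \<Sigma>" "w \<notin> ?L" using Lsub by blast
    show ?thesis
    proof (cases "?L = {}")
      case True
      define B :: "'a nfa" where "B = \<lparr>nstates = {0}, ninit = 0, ntrans = (\<lambda>q a. {}), nfinal = {}\<rparr>"
      have "wf_nfa \<Sigma> B" by (simp add: B_def wf_nfa_def)
      moreover have "nlang \<Sigma> B = ?L" using True unfolding nlang_def by (auto simp: B_def)
      ultimately have "n \<le> 1" using minA by (fastforce simp: B_def)
      then show ?thesis using \<open>n \<ge> 1\<close> by simp
    next
      case False
      then obtain v where "v \<in> ?L" by blast
      then have eps: "[] \<in> ?L" using ic unfolding infix_closed_def by (metis append_Nil)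
      obtain D where D: "wf_dfa \<Sigma> D" "dlang \<Sigma> D = ?L" "card (dstates D) = n"
        using d unfolding min_dfa_states_def by auto
      let ?f = "\<lambda>z q. fold (\<lambda>a q. dtrans D q a) z q"
      define s where "s = ?f w (dinit D)"
      have initD: "dinit D \<in> dstates D" using D(1) unfolding wf_dfa_def by auto
      have sD: "s \<in> dstates D" unfolding s_def using dfa_states_in[OF D(1) initD w(1)] .
      have dead: "?f z s \<notin> dfinal D" if "z \<in> lists \<Sigma>" for z
      proof
        assume "?f z s \<in> dfinal D"
        then have "w @ z \<in> dlang \<Sigma> D" using w(1) that unfolding dlang_def s_def by auto
        then have "w \<in> ?L" using D(2) ic unfolding infix_closed_def by (metis append_Nil append.right_neutral)
        then show False using w by auto
      qed
      have sF: "s \<notin> dfinal D" using dead[of "[]"] by simp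
      have "[] \<in> dlang \<Sigma> D" using eps D(2) by simp
      then have iF: "dinit D \<in> dfinal D" unfolding dlang_def by simp
      define B :: "'a nfa" where "B = \<lparr>nstates = dstates D - {s}, ninit = dinit D,
          ntrans = (\<lambda>q a. {dtrans D q a} - {s}), nfinal = dfinal D\<rparr>"
      have wfB: "wf_nfa \<Sigma> B" using D(1) sF iF unfolding B_def wf_nfa_def wf_dfa_def by auto
      have key: "nreach B {q} z \<inter> dfinal D \<noteq> {} \<longleftrightarrow> ?f z q \<in> dfinal D"
        if "q \<noteq> s" "z \<in> lists \<Sigma>" for q z
        using that
      proof (induction z arbitrary: q)
        case Nil then show ?case by auto
      next
        case (Cons a z)
        show ?case
        proof (cases "dtrans D q a = s")
          case True
          then show ?thesis using dead[of z] Cons.prems by (simp add: B_def)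
        next
          case False
          then show ?thesis using Cons.IH[of "dtrans D q a"] Cons.prems by (simp add: B_def)
        qed
      qed
      have "dinit D \<noteq> s" using sF iF by auto
      then have "\<forall>z\<in>lists \<Sigma>. (nreach B {ninit B} z \<inter> nfinal B \<noteq> {}) = (?f z (dinit D) \<in> dfinal D)"
        using key[of "dinit D"] by (simp add: B_def)
      then have "nlang \<Sigma> B = dlang \<Sigma> D" unfolding nlang_def dlang_def by blast
      then have "nlang \<Sigma> B = ?L" using D(2) by simp
      then have "n \<le> card (dstates D - {s})" using minA[OF wfB] by (simp add: B_def)
      also have "\<dots> = n - 1" using sD D(3) D(1) unfolding wf_dfa_def by simp
      finally show ?thesis using \<open>n \<ge> 1\<close> by simp
    qed
  qed
qed




definition Tr :: "nat \<Rightarrow> (nat \<Rightarrow> nat set) \<Rightarrow> nat \<Rightarrow> nat \<Rightarrow> nat set" where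
  "Tr k h q x = (if x = 0 then {} else if odd x then (if q = 0 \<or> q = x div 2 then {0} else {})
      else (if q = 0 \<and> (x - 2) div 2 < k then h ((x - 2) div 2) else {}))"

definition Aut :: "nat \<Rightarrow> nat \<Rightarrow> (nat \<Rightarrow> nat set) \<Rightarrow> nat nfa" where
  "Aut m k h = \<lparr>nstates = {0..m}, ninit = 0, ntrans = Tr k h, nfinal = {0..m}\<rparr>"

definition Sig :: "nat \<Rightarrow> nat \<Rightarrow> nat set" where
  "Sig m k = {0} \<union> (\<lambda>i. 2 * i + 1) ` {1..m} \<union> (\<lambda>j. 2 * j + 2) ` {..<k}"

locale cons =
  fixes m k :: nat and h :: "nat \<Rightarrow> nat set"
  assumes hsub: "\<And>j. j < k \<Longrightarrow> h j \<subseteq> {1..m}"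
    and hne: "\<And>j. j < k \<Longrightarrow> h j \<noteq> {}"
    and hinj: "inj_on h {..<k}"
    and hsing: "\<And>i. i \<in> {1..m} \<Longrightarrow> \<exists>j<k. h j = {i}"
begin

abbreviation "A \<equiv> Aut m k h"
abbreviation "S \<equiv> Sig m k"
definition "Rset = insert {0} (insert {} (h ` {..<k}))"

lemma ntransA[simp]: "ntrans A = Tr k h" "ninit A = 0" "nstates A = {0..m}" "nfinal A = {0..m}"
  by (auto simp: Aut_def)

lemma Tr_sub: "Tr k h q x \<subseteq> {0..m}"
proof -
  have "h ((x - 2) div 2) \<subseteq> {0..m}" if "(x - 2) div 2 < k" using hsub[OF that] by auto
  then show ?thesis unfolding Tr_def by simp
qed

lemma reach_sub: "nreach A X w \<subseteq> {0..m}" if "X \<subseteq> {0..m}"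
  using that
proof (induction w arbitrary: X)
  case (Cons a w) then show ?case using Tr_sub by (simp add: UN_least)
qed simp

lemma wfA: "wf_nfa S A"
  unfolding wf_nfa_def using Tr_sub by simp

lemma nlangA: "nlang S A = {w \<in> lists S. nreach A {0} w \<noteq> {}}"
  unfolding nlang_def using reach_sub[of "{0}"] by auto

lemma one: "nreach A X [x] = (\<Union>q\<in>X. Tr k h q x)" by simp

lemma from_any: "nreach A {q} w \<noteq> {} \<Longrightarrow> nreach A {0} w \<noteq> {}"
proof (cases w)
  case (Cons a w')
  assume ne: "nreach A {q} w \<noteq> {}"
  show ?thesis
  proof (cases "q = 0")
    case False
    have "Tr k h q a = {} \<or> (Tr k h q a = {0} \<and> Tr k h 0 a = {0})"
      using False unfolding Tr_def by simp
    then show ?thesis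
    proof
      assume "Tr k h q a = {}" then show ?thesis using ne Cons by simp
    next
      assume "Tr k h q a = {0} \<and> Tr k h 0 a = {0}" then show ?thesis using ne Cons by simp
    qed
  next
    case True then show ?thesis using ne by simp
  qed
qed simp

lemma infix_cl: "infix_closed (nlang S A)"
  unfolding infix_closed_def nlangA
proof (intro allI impI)
  fix x y z :: "nat list"
  assume a: "x @ y @ z \<in> {w \<in> lists S. nreach A {0} w \<noteq> {}}"
  then have l: "y \<in> lists S" and r: "nreach A {0} (x @ y @ z) \<noteq> {}" by auto
  from r have "nreach A (nreach A {0} x) y \<noteq> {}"
    unfolding nreach_append by (metis nreach_empty)
  then obtain q where "nreach A {q} y \<noteq> {}"
    by (subst (asm) nreach_union) auto
  then show "y \<in> {w \<in> lists S. nreach A {0} w \<noteq> {}}" using from_any l by auto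
qed

lemma T_odd: "X \<subseteq> {1..m} \<Longrightarrow> (\<Union>q\<in>X. Tr k h q (2 * i + 1)) = (if i \<in> X then {0} else {})"
  unfolding Tr_def by auto

lemma T_even: "X \<subseteq> {1..m} \<Longrightarrow> (\<Union>q\<in>X. Tr k h q (2 * j + 2)) = {}"
  unfolding Tr_def by auto

lemma T0_even: "j < k \<Longrightarrow> Tr k h 0 (2 * j + 2) = h j"
  unfolding Tr_def by auto

lemma step_closed: "X \<in> Rset \<Longrightarrow> (\<Union>q\<in>X. Tr k h q x) \<in> Rset"
proof -
  assume X: "X \<in> Rset"
  show ?thesis
  proof (cases "X = {0}")
    case True
    then show ?thesis unfolding Rset_def Tr_def by auto
  next
    case False
    then have X1: "X \<subseteq> {1..m}" using X hsub unfolding Rset_def by auto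
    then have "\<forall>q\<in>X. q \<noteq> 0" by auto
    then have "(\<Union>q\<in>X. Tr k h q x) = {} \<or> (\<Union>q\<in>X. Tr k h q x) = {0}"
      unfolding Tr_def by auto
    then show ?thesis unfolding Rset_def by (metis insertI1 insertI2)
  qed
qed

lemma reach_R: "nreach A {0} w \<in> Rset"
proof (induction w rule: rev_induct)
  case Nil then show ?case by (simp add: Rset_def)
next
  case (snoc x w)
  then show ?case unfolding nreach_append one using step_closed by simp
qed

lemma S_mem: "0 \<in> S" "i \<in> {1..m} \<Longrightarrow> 2 * i + 1 \<in> S" "j < k \<Longrightarrow> 2 * j + 2 \<in> S"
  unfolding Sig_def by auto

lemma R_eq: "(\<lambda>w. nreach A {0} w) ` lists S = Rset"
proof
  show "(\<lambda>w. nreach A {0} w) ` lists S \<subseteq> Rset" using reach_R by auto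
next
  show "Rset \<subseteq> (\<lambda>w. nreach A {0} w) ` lists S"
  proof
    fix X assume "X \<in> Rset"
    then consider "X = {0}" | "X = {}" | j where "j < k" "X = h j" unfolding Rset_def by auto
    then show "X \<in> (\<lambda>w. nreach A {0} w) ` lists S"
    proof cases
      case 1 then show ?thesis by (intro image_eqI[of _ _ "[]"]) auto
    next
      case 2 then show ?thesis using S_mem
        by (intro image_eqI[of _ _ "[0]"]) (auto simp: Tr_def)
    next
      case 3 then show ?thesis using S_mem T0_even
        by (intro image_eqI[of _ _ "[2 * j + 2]"]) auto
    qed
  qed
qed

definition "lng X = {z \<in> lists S. nreach A X z \<noteq> {}}"

lemma quot_eq: "u \<in> lists S \<Longrightarrow> quot S (nlang S A) u = lng (nreach A {0} u)"
  unfolding quot_def lng_def nlangA by (auto simp: nreach_append)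

lemma lng_inj: "inj_on lng Rset"
proof (rule inj_onI)
  fix X Y assume X: "X \<in> Rset" and Y: "Y \<in> Rset" and e: "lng X = lng Y"
  have eps: "[] \<in> lng Z \<longleftrightarrow> Z \<noteq> {}" for Z unfolding lng_def by auto
  have sub: "Z \<subseteq> {1..m}" if "Z \<in> Rset" "Z \<noteq> {0}" for Z using that hsub unfolding Rset_def by auto
  have z0: "[2] \<in> lng {0}" if "k > 0"
  proof -
    have "Tr k h 0 2 = h 0" using that unfolding Tr_def by simp
    moreover have "(2::nat) \<in> S" using S_mem(3)[of 0] that by (metis add_0 mult_0_right)
    ultimately show ?thesis using hne[of 0] that unfolding lng_def by simp
  qed
  have zT: "[2] \<notin> lng Z" if "Z \<subseteq> {1..m}" for Z
  proof -
    have "\<forall>q\<in>Z. Tr k h q 2 = {}" using that unfolding Tr_def by auto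
    then show ?thesis unfolding lng_def by auto
  qed
  have ci: "[2 * i + 1] \<in> lng Z \<longleftrightarrow> i \<in> Z" if "Z \<subseteq> {1..m}" "i \<in> {1..m}" for Z i
    using T_odd[OF that(1), of i] S_mem(2)[OF that(2)] unfolding lng_def by auto
  show "X = Y"
  proof (cases "X = {0} \<or> Y = {0}")
    case True
    have k: "k > 0" if "Z \<in> Rset" "Z \<noteq> {0}" "Z \<noteq> {}" for Z using that unfolding Rset_def by auto
    have c0: "Z = {0}" if z1: "lng {0} = lng Z" and z2: "Z \<in> Rset" for Z
    proof (rule ccontr)
      assume z3: "Z \<noteq> {0}"
      show False
      proof (cases "Z = {}")
        case True
        then show False using eps[of "{0}"] eps[of Z] z1 by simp
      next
        case False
        then have "k > 0" "Z \<subseteq> {1..m}" using k[OF z2 z3] sub[OF z2 z3] by auto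
        then show False using z0 zT z1 by auto
      qed
    qed
    show ?thesis
    proof (cases "X = {0}")
      case True
      then show ?thesis using c0[of Y] e Y by simp
    next
      case False
      then have "Y = {0}" using \<open>X = {0} \<or> Y = {0}\<close> by simp
      then show ?thesis using c0[of X] e X by simp
    qed
  next
    case False
    then have XS: "X \<subseteq> {1..m}" and YS: "Y \<subseteq> {1..m}" using sub X Y by auto
    show ?thesis
    proof (rule ccontr)
      assume "X \<noteq> Y"
      then obtain i where "i \<in> X \<and> i \<notin> Y \<or> i \<in> Y \<and> i \<notin> X" by blast
      then show False using ci[OF XS] ci[OF YS] XS YS e by blast
    qed
  qed
qed

lemma card_R: "card Rset = k + 2"
proof -
  have "card (h ` {..<k}) = k" using card_image[OF hinj] by simp
  moreover have "{0} \<notin> h ` {..<k}"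
  proof
    assume "{0} \<in> h ` {..<k}"
    then obtain j where j: "j < k" "h j = {0}" by auto
    then have "(0::nat) \<in> h j" by simp
    then show False using hsub[OF j(1)] by auto
  qed
  moreover have "{} \<notin> h ` {..<k}"
  proof
    assume "{} \<in> h ` {..<k}"
    then obtain j where j: "j < k" "h j = {}" by auto
    then show False using hne[OF j(1)] by simp
  qed
  ultimately show ?thesis unfolding Rset_def by simp
qed

lemma dfa: "min_dfa_states S (nlang S A) (k + 2)"
proof (rule min_dfa_quot)
  show "nlang S A \<subseteq> lists S" unfolding nlang_def by auto
  have "quot S (nlang S A) ` lists S = lng ` Rset"
    unfolding R_eq[symmetric] image_image using quot_eq by simp
  moreover have "finite Rset" by (simp add: Rset_def)
  ultimately show "finite (quot S (nlang S A) ` lists S)" "card (quot S (nlang S A) ` lists S) = k + 2"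
    using card_R card_image[OF lng_inj] by simp_all
qed

lemma finS: "finite S" unfolding Sig_def by auto

lemma minimal: "minimal_nfa S A (m + 1)"
  unfolding minimal_nfa_def
proof (intro conjI allI impI)
  show "wf_nfa S A" using wfA .
  show "card (nstates A) = m + 1" by simp
  fix B assume B: "wf_nfa S B \<and> nlang S B = nlang S A"
  show "m + 1 \<le> card (nstates B)"
  proof (cases "m = 0")
    case True
    have "ninit B \<in> nstates B" "finite (nstates B)" using B unfolding wf_nfa_def by auto
    then have "card (nstates B) \<ge> 1" by (metis One_nat_def Suc_leI card_gt_0_iff empty_iff)
    then show ?thesis using True by simp
  next
    case False
    define si where "si i = (SOME j. j < k \<and> h j = {i})" for i
    have si: "si i < k \<and> h (si i) = {i}" if "i \<in> {1..m}" for i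
      unfolding si_def using someI_ex[OF hsing[OF that]] by blast
    have m1: "1 \<in> {1..m}" using False by auto
    define x where "x i = (if i = 0 then [] else [2 * si i + 2])" for i
    define y where "y i = (if i = 0 then [2 * si 1 + 2] else [2 * i + 1])" for i
    have hS: "h (si i) \<subseteq> {1..m}" if "i \<in> {1..m}" for i using si[OF that] that by auto
    have xy_lists: "x i @ y j \<in> lists S" if "i \<in> {0..m}" "j \<in> {0..m}" for i j
    proof -
      have "x i \<in> lists S"
      proof (cases "i = 0")
        case False
        then have "i \<in> {1..m}" using that by auto
        then have "2 * si i + 2 \<in> S" using si S_mem(3) by blast
        then show ?thesis unfolding x_def using False by simp
      qed (simp add: x_def)
      moreover have "y j \<in> lists S"
      proof (cases "j = 0")
        case True
        have "2 * si 1 + 2 \<in> S" using si[OF m1] S_mem(3) by blast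
        then show ?thesis unfolding y_def using True by simp
      next
        case False
        then have "j \<in> {1..m}" using that by auto
        then have "2 * j + 1 \<in> S" using S_mem(2) by blast
        then show ?thesis unfolding y_def using False by simp
      qed
      ultimately show ?thesis by simp
    qed
    have rA: "nreach A {0} [2 * j + 2] = h j" if "j < k" for j
      using T0_even[OF that] by simp
    have rO: "nreach A X [2 * i + 1] = (if i \<in> X then {0} else {})" if "X \<subseteq> {1..m}" for X i
      using T_odd[OF that] by simp
    have rE: "nreach A X [2 * j + 2] = {}" if "X \<subseteq> {1..m}" for X j
      using T_even[OF that] by simp
    have acc: "x i @ y i \<in> nlang S A" if "i \<in> {0..m}" for i
    proof (cases "i = 0")
      case True
      have "nreach A {0} (x i @ y i) = h (si 1)" using True rA si[OF m1] by (simp add: x_def y_def)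
      then have "nreach A {0} (x i @ y i) \<noteq> {}" using si[OF m1] by simp
      then show ?thesis using xy_lists[OF that that] unfolding nlangA by simp
    next
      case False
      then have i: "i \<in> {1..m}" using that by auto
      have "x i @ y i = [2 * si i + 2] @ [2 * i + 1]" using False by (simp add: x_def y_def)
      then have "nreach A {0} (x i @ y i) = nreach A (h (si i)) [2 * i + 1]"
        using rA si[OF i] by (simp only: nreach_append)
      also have "\<dots> = {0}" using rO[OF hS[OF i], of i] si[OF i] by simp
      finally show ?thesis using xy_lists[OF that that] unfolding nlangA by simp
    qed
    have rej: "x i @ y j \<notin> nlang S A \<or> x j @ y i \<notin> nlang S A"
      if "i \<in> {0..m}" "j \<in> {0..m}" "i \<noteq> j" for i j
    proof -
      have r1: "x a @ y b \<notin> nlang S A" if ab: "a \<in> {1..m}" "b \<in> {0..m}" "a \<noteq> b" for a b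
      proof -
        have "a \<noteq> 0" using ab by auto
        then have "x a @ y b = [2 * si a + 2] @ y b" by (simp add: x_def)
        then have "nreach A {0} (x a @ y b) = nreach A (h (si a)) (y b)"
          using rA si[OF ab(1)] by (simp only: nreach_append)
        also have "\<dots> = {}"
        proof (cases "b = 0")
          case True
          then show ?thesis unfolding y_def using rE[OF hS[OF ab(1)]] by simp
        next
          case False
          then show ?thesis unfolding y_def using rO[OF hS[OF ab(1)], of b] si[OF ab(1)] ab(3) by simp
        qed
        finally show ?thesis unfolding nlangA by simp
      qed
      show ?thesis
      proof (cases "i = 0")
        case True
        then have "j \<in> {1..m}" using that by auto
        then show ?thesis using r1[of j i] that by auto
      next
        case False
        then have "i \<in> {1..m}" using that by auto
        then show ?thesis using r1[of i j] that by auto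
      qed
    qed
    have "card {0..m} \<le> card (nstates B)"
      by (rule fooling[of S B _ x y]) (use B acc rej in auto)
    then show ?thesis by simp
  qed
qed

end



lemma family:
  assumes mk: "m \<le> k" and k2: "k \<le> 2 ^ m - 1"
  shows "\<exists>h. (\<forall>j<k. h j \<subseteq> {1..m} \<and> h j \<noteq> {}) \<and> inj_on h {..<k}
           \<and> (\<forall>i\<in>{1..m}. \<exists>j<k. h j = {i})"
proof -
  let ?P = "Pow {1..m} - {{}} :: nat set set"
  have cP: "card ?P = 2 ^ m - 1"
    using card_Pow[of "{1..m::nat}"] by (simp add: card_Diff_singleton)
  let ?Sg = "(\<lambda>i. {i}) ` {1..m} :: nat set set"
  have cS: "card ?Sg = m" by (simp add: card_image inj_on_def)
  have sub: "?Sg \<subseteq> ?P" by auto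
  have finP: "finite ?P" by simp
  have "card (?P - ?Sg) = 2 ^ m - 1 - m"
    using card_Diff_subset[OF finite_subset[OF sub finP] sub] cP cS by simp
  then have "k - m \<le> card (?P - ?Sg)" using k2 by simp
  then obtain X where X: "X \<subseteq> ?P - ?Sg" "card X = k - m" "finite X"
    by (rule obtain_subset_with_card_n)
  let ?F = "?Sg \<union> X"
  have cF: "card ?F = k"
    using card_Un_disjoint[of ?Sg X] X cS mk by auto
  have finF: "finite ?F" using X by simp
  obtain h where h: "bij_betw h {0..<card ?F} ?F" using ex_bij_betw_nat_finite[OF finF] by blast
  then have h': "bij_betw h {..<k} ?F" using cF by (simp add: atLeast0LessThan)
  have FP: "?F \<subseteq> ?P" using X sub by auto
  show ?thesis
  proof (rule exI[of _ h], intro conjI)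
    show "\<forall>j<k. h j \<subseteq> {1..m} \<and> h j \<noteq> {}"
    proof (intro allI impI)
      fix j :: nat assume "j < k"
      then have "h j \<in> ?P" using bij_betwE[OF h'] FP by blast
      then show "h j \<subseteq> {1..m} \<and> h j \<noteq> {}" by auto
    qed
  next
    show "inj_on h {..<k}" using h' by (simp add: bij_betw_def)
  next
    show "\<forall>i\<in>{1..m}. \<exists>j<k. h j = {i}"
    proof
    fix i assume "i \<in> {1..m}"
    then have "{i} \<in> ?F" by auto
    then have "{i} \<in> h ` {..<k}" using h' by (simp add: bij_betw_def)
    then show "\<exists>j<k. h j = {i}" by (metis imageE lessThan_iff)
    qed
  qed
qed

theorem mainTheorem7:
  shows "(\<forall>n \<alpha> :: nat. 1 \<le> n \<and> n < \<alpha> \<and> \<alpha> \<le> 2 ^ (n - 1) + 1 \<longrightarrow>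
           (\<exists>(\<Sigma> :: nat set) A. finite \<Sigma> \<and> minimal_nfa \<Sigma> A n
              \<and> infix_closed (nlang \<Sigma> A) \<and> min_dfa_states \<Sigma> (nlang \<Sigma> A) \<alpha>))
       \<and> (\<forall>(\<Sigma> :: 'a set) (A :: 'a nfa) n. finite \<Sigma> \<and> minimal_nfa \<Sigma> A n
              \<and> infix_closed (nlang \<Sigma> A) \<and> min_dfa_states \<Sigma> (nlang \<Sigma> A) n \<longrightarrow> n = 1)"
proof (intro conjI allI impI)
  fix n \<alpha> :: nat
  assume a: "1 \<le> n \<and> n < \<alpha> \<and> \<alpha> \<le> 2 ^ (n - 1) + 1"
  define m where "m = n - 1"
  define k where "k = \<alpha> - 2"
  have nm: "n = m + 1" using a unfolding m_def by simp
  have ak: "\<alpha> = k + 2" using a unfolding k_def by arith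
  have am: "\<alpha> \<le> 2 ^ m + 1" using a unfolding m_def by simp
  have gen: "\<forall>x::nat. \<alpha> \<le> x + 1 \<longrightarrow> \<alpha> - 2 \<le> x - 1" by arith
  have mk: "m \<le> k" using a unfolding m_def k_def by arith
  have k2: "k \<le> 2 ^ m - 1" using gen am unfolding k_def by blast
  obtain h where h: "\<forall>j<k. h j \<subseteq> {1..m} \<and> h j \<noteq> {}" "inj_on h {..<k}"
      "\<forall>i\<in>{1..m}. \<exists>j<k. h j = {i}"
    using family[OF mk k2] by (elim exE conjE) simp
  interpret c: cons m k h by unfold_locales (use h in auto)
  show "\<exists>(\<Sigma> :: nat set) A. finite \<Sigma> \<and> minimal_nfa \<Sigma> A n
              \<and> infix_closed (nlang \<Sigma> A) \<and> min_dfa_states \<Sigma> (nlang \<Sigma> A) \<alpha>"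
    by (rule exI[of _ "Sig m k"], rule exI[of _ "Aut m k h"], unfold nm ak,
        intro conjI c.finS c.minimal c.infix_cl c.dfa)
next
  fix \<Sigma> :: "'a set" and A :: "'a nfa" and n :: nat
  assume "finite \<Sigma> \<and> minimal_nfa \<Sigma> A n \<and> infix_closed (nlang \<Sigma> A) \<and> min_dfa_states \<Sigma> (nlang \<Sigma> A) n"
  then show "n = 1" using part2[of \<Sigma> A n] by simp
qed

end
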